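(* Let $n\ge4$ and for $1\le p\le n$ let $K_p$ be the set of regular elements of $\mathcal{OCT}_n$ whose image has exactly $p$ elements. Then for all $1\le p\le n-2$, $\langle K_p\rangle\subseteq\langle K_{p+1}\rangle$, where $\langle A\rangle$ denotes the subsemigroup of $\mathcal{T}_n$ generated by $A$.
   Context: $\mathcal{T}_n$ is the full transformation semigroup on $[n]=\{1,\dots,n\}$ under composition. $\alpha$ is a contraction if $|x\alpha-y\alpha|\le|x-y|$ for all $x,y$, order-preserving if $x\le y\Rightarrow x\alpha\le y\alpha$. $\mathcal{OCT}_n$ is the semigroup of order-preserving contractions; $\alpha\in\mathcal{OCT}_n$ is regular if $\alpha\beta\alpha=\alpha$ for some $\beta\in\mathcal{OCT}_n$. *)

theory Defs
  imports Main
begin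

(* Transformations of [n] = {1..n} are represented as functions nat => nat that
   map {1..n} into {1..n} and act as the identity outside {1..n} (so that each
   transformation has a unique representative). *)
definition T :: "nat \<Rightarrow> (nat \<Rightarrow> nat) set" where
  "T n = {a. (\<forall>x\<in>{1..n}. a x \<in> {1..n}) \<and> (\<forall>x. x \<notin> {1..n} \<longrightarrow> a x = x)}"

(* Composition in the paper's right-action convention: x(a b) = (x a) b. *)
definition tcomp :: "(nat \<Rightarrow> nat) \<Rightarrow> (nat \<Rightarrow> nat) \<Rightarrow> (nat \<Rightarrow> nat)" where
  "tcomp a b = b \<circ> a"

definition order_preserving :: "nat \<Rightarrow> (nat \<Rightarrow> nat) \<Rightarrow> bool" where
  "order_preserving n a \<longleftrightarrow> (\<forall>x\<in>{1..n}. \<forall>y\<in>{1..n}. x \<le> y \<longrightarrow> a x \<le> a y)"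

definition contraction :: "nat \<Rightarrow> (nat \<Rightarrow> nat) \<Rightarrow> bool" where
  "contraction n a \<longleftrightarrow>
     (\<forall>x\<in>{1..n}. \<forall>y\<in>{1..n}. \<bar>int (a x) - int (a y)\<bar> \<le> \<bar>int x - int y\<bar>)"

definition OCT :: "nat \<Rightarrow> (nat \<Rightarrow> nat) set" where
  "OCT n = {a \<in> T n. order_preserving n a \<and> contraction n a}"

definition regular_OCT :: "nat \<Rightarrow> (nat \<Rightarrow> nat) \<Rightarrow> bool" where
  "regular_OCT n a \<longleftrightarrow> a \<in> OCT n \<and> (\<exists>b\<in>OCT n. tcomp (tcomp a b) a = a)"

definition K :: "nat \<Rightarrow> nat \<Rightarrow> (nat \<Rightarrow> nat) set" where
  "K n p = {a. regular_OCT n a \<and> card (a ` {1..n}) = p}"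

inductive_set gen :: "(nat \<Rightarrow> nat) set \<Rightarrow> (nat \<Rightarrow> nat) set" for A where
  base: "a \<in> A \<Longrightarrow> a \<in> gen A"
| comp: "a \<in> gen A \<Longrightarrow> b \<in> gen A \<Longrightarrow> tcomp a b \<in> gen A"

end

theory Submission
  imports Defs
begin

definition F :: "nat \<Rightarrow> nat \<Rightarrow> nat \<Rightarrow> nat \<Rightarrow> nat \<Rightarrow> nat" where
  "F n k a p x = (if 1 \<le> x \<and> x \<le> n then a + min (max x k) (k + p - 1) - k else x)"

lemma F_out: "x < 1 \<or> n < x \<Longrightarrow> F n k a p x = x"
  unfolding F_def by auto

lemma F_lo: "1 \<le> p \<Longrightarrow> 1 \<le> x \<Longrightarrow> x \<le> n \<Longrightarrow> x \<le> k \<Longrightarrow> F n k a p x = a"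
  unfolding F_def by (simp add: max_def min_def; arith)

lemma F_mid: "1 \<le> x \<Longrightarrow> x \<le> n \<Longrightarrow> k \<le> x \<Longrightarrow> x \<le> k + p - 1 \<Longrightarrow> F n k a p x = a + x - k"
  unfolding F_def by (simp add: max_def min_def)

lemma F_hi: "1 \<le> p \<Longrightarrow> 1 \<le> x \<Longrightarrow> x \<le> n \<Longrightarrow> k + p - 1 \<le> x \<Longrightarrow> F n k a p x = a + p - 1"
  unfolding F_def by (simp add: max_def min_def; arith)

lemma F_OCT:
  assumes "1 \<le> p" "1 \<le> k" "k + p - 1 \<le> n" "1 \<le> a" "a + p - 1 \<le> n"
  shows "F n k a p \<in> OCT n"
proof -
  have T: "F n k a p \<in> T n"
    using assms unfolding T_def F_def by (auto simp: min_def max_def)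
  have op: "order_preserving n (F n k a p)"
    unfolding order_preserving_def F_def by auto
  have ct: "contraction n (F n k a p)"
    unfolding contraction_def F_def by (auto simp: min_def max_def)
  show ?thesis using T op ct unfolding OCT_def by auto
qed

lemma F_K:
  assumes "1 \<le> p" "1 \<le> k" "k + p - 1 \<le> n" "1 \<le> a" "a + p - 1 \<le> n"
  shows "F n k a p \<in> K n p"
proof -
  have O1: "F n k a p \<in> OCT n" using F_OCT assms by auto
  have O2: "F n a k p \<in> OCT n" using F_OCT assms by auto
  have reg: "tcomp (tcomp (F n k a p) (F n a k p)) (F n k a p) = F n k a p"
  proof
    fix x
    show "tcomp (tcomp (F n k a p) (F n a k p)) (F n k a p) x = F n k a p x"
    proof (cases "x < 1 \<or> n < x")
      case True then show ?thesis by (simp add: tcomp_def F_out)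
    next
      case False
      then have x: "1 \<le> x" "x \<le> n" by auto
      consider "x \<le> k" | "k \<le> x" "x \<le> k + p - 1" | "k + p - 1 \<le> x" by linarith
      then show ?thesis
      proof cases
        case 1 then show ?thesis using x assms by (simp add: tcomp_def F_lo F_mid)
      next
        case 2
        have "F n a k p (a + x - k) = k + x - k" using x assms 2 by (subst F_mid) auto
        then show ?thesis using x assms 2 by (simp add: tcomp_def F_mid)
      next
        case 3
        have "F n a k p (a + p - 1) = k + p - 1" using x assms 3 by (subst F_hi) auto
        then show ?thesis using x assms 3 by (simp add: tcomp_def F_hi)
      qed
    qed
  qed
  have img: "F n k a p ` {1..n} = {a..a+p-1}"
  proof
    show "F n k a p ` {1..n} \<subseteq> {a..a+p-1}" using assms by (auto simp: F_def)
    show "{a..a+p-1} \<subseteq> F n k a p ` {1..n}"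
    proof
      fix y assume y: "y \<in> {a..a+p-1}"
      have "F n k a p (k + (y - a)) = y" "k + (y - a) \<in> {1..n}"
        using y assms by (auto simp: F_def)
      then show "y \<in> F n k a p ` {1..n}" by force
    qed
  qed
  show ?thesis unfolding K_def regular_OCT_def using O1 O2 reg img assms by auto
qed

lemma F_comp1:
  assumes "1 \<le> p" "p + 2 \<le> n" "k \<ge> 1" "k + p \<le> n" "a \<ge> 2" "a + p - 1 \<le> n"
  shows "tcomp (F n k 2 (p+1)) (F n 1 (a - 1) (p+1)) = F n k a p"
proof
  fix x
  show "tcomp (F n k 2 (p+1)) (F n 1 (a - 1) (p+1)) x = F n k a p x"
  proof (cases "x < 1 \<or> n < x")
    case True then show ?thesis by (simp add: tcomp_def F_out)
  next
    case False
    then have x: "1 \<le> x" "x \<le> n" by auto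
    consider "x \<le> k" | "k \<le> x" "x \<le> k + p - 1" | "k + p \<le> x" by linarith
    then show ?thesis
    proof cases
      case 1 then show ?thesis using x assms by (simp add: tcomp_def F_lo F_mid F_hi)
    next
      case 2 then show ?thesis using x assms by (simp add: tcomp_def F_lo F_mid F_hi)
    next
      case 3 then show ?thesis using x assms by (simp add: tcomp_def F_lo F_mid F_hi)
    qed
  qed
qed

lemma F_comp2:
  assumes "1 \<le> p" "p + 2 \<le> n" "k \<ge> 2" "k + p - 1 \<le> n" "a \<ge> 1" "a + p \<le> n"
  shows "tcomp (F n (k - 1) 1 (p+1)) (F n 2 a (p+1)) = F n k a p"
proof
  fix x
  show "tcomp (F n (k - 1) 1 (p+1)) (F n 2 a (p+1)) x = F n k a p x"
  proof (cases "x < 1 \<or> n < x")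
    case True then show ?thesis by (simp add: tcomp_def F_out)
  next
    case False
    then have x: "1 \<le> x" "x \<le> n" by auto
    consider "x \<le> k - 1" | "x = k" | "k \<le> x" "x \<le> k + p - 1" | "k + p - 1 \<le> x" by linarith
    then show ?thesis
    proof cases
      case 1 then show ?thesis using x assms by (simp add: tcomp_def F_lo F_mid F_hi)
    next
      case 2 then show ?thesis using x assms by (simp add: tcomp_def F_lo F_mid F_hi)
    next
      case 3 then show ?thesis using x assms by (simp add: tcomp_def F_lo F_mid F_hi)
    next
      case 4 then show ?thesis using x assms by (simp add: tcomp_def F_lo F_mid F_hi)
    qed
  qed
qed

lemma F_shift1:
  assumes "1 \<le> p" "p + 2 \<le> n"
  shows "tcomp (F n 1 2 p) (F n 2 1 (p+1)) = F n 1 1 p"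
proof
  fix x
  show "tcomp (F n 1 2 p) (F n 2 1 (p+1)) x = F n 1 1 p x"
  proof (cases "x < 1 \<or> n < x")
    case True then show ?thesis by (simp add: tcomp_def F_out)
  next
    case False
    then have x: "1 \<le> x" "x \<le> n" by auto
    consider "x \<le> 1" | "1 \<le> x" "x \<le> p" | "p \<le> x" by linarith
    then show ?thesis
    proof cases
      case 1 then show ?thesis using x assms by (simp add: tcomp_def F_lo F_mid F_hi)
    next
      case 2 then show ?thesis using x assms by (simp add: tcomp_def F_lo F_mid F_hi)
    next
      case 3 then show ?thesis using x assms by (simp add: tcomp_def F_lo F_mid F_hi)
    qed
  qed
qed

lemma F_shift2:
  assumes "1 \<le> p" "p + 2 \<le> n"
  shows "tcomp (F n (n-p+1) (n-p) p) (F n (n-p-1) (n-p) (p+1)) = F n (n-p+1) (n-p+1) p"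
proof
  fix x
  show "tcomp (F n (n-p+1) (n-p) p) (F n (n-p-1) (n-p) (p+1)) x = F n (n-p+1) (n-p+1) p x"
  proof (cases "x < 1 \<or> n < x")
    case True then show ?thesis by (simp add: tcomp_def F_out)
  next
    case False
    then have x: "1 \<le> x" "x \<le> n" by auto
    consider "x \<le> n-p+1" | "n-p+1 \<le> x" by linarith
    then show ?thesis
    proof cases
      case 1 then show ?thesis using x assms by (simp add: tcomp_def F_lo F_mid F_hi)
    next
      case 2 then show ?thesis using x assms by (simp add: tcomp_def F_lo F_mid F_hi)
    qed
  qed
qed

lemma char:
  assumes fK: "f \<in> K n p" and p: "1 \<le> p"
  shows "\<exists>k a. 1 \<le> k \<and> k + p - 1 \<le> n \<and> 1 \<le> a \<and> a + p - 1 \<le> n \<and> f = F n k a p"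
proof -
  from fK have fO: "f \<in> OCT n" and cardp: "card (f ` {1..n}) = p"
    unfolding K_def regular_OCT_def by auto
  from fK obtain g where gO: "g \<in> OCT n" and fgf: "tcomp (tcomp f g) f = f"
    unfolding K_def regular_OCT_def by auto
  have fgf': "f (g (f x)) = f x" for x using fgf unfolding tcomp_def by (metis comp_apply)
  have fT: "\<And>x. x \<in> {1..n} \<Longrightarrow> f x \<in> {1..n}" "\<And>x. x \<notin> {1..n} \<Longrightarrow> f x = x"
    using fO unfolding OCT_def T_def by auto
  have gT: "\<And>x. x \<in> {1..n} \<Longrightarrow> g x \<in> {1..n}"
    using gO unfolding OCT_def T_def by auto
  have fmono: "\<And>x y. x \<in> {1..n} \<Longrightarrow> y \<in> {1..n} \<Longrightarrow> x \<le> y \<Longrightarrow> f x \<le> f y"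
    using fO unfolding OCT_def order_preserving_def by auto
  have gmono: "\<And>x y. x \<in> {1..n} \<Longrightarrow> y \<in> {1..n} \<Longrightarrow> x \<le> y \<Longrightarrow> g x \<le> g y"
    using gO unfolding OCT_def order_preserving_def by auto
  have fcon: "\<And>x. 1 \<le> x \<Longrightarrow> x + 1 \<le> n \<Longrightarrow> f (x + 1) \<le> f x + 1"
  proof -
    fix x assume "1 \<le> x" "x + 1 \<le> n"
    moreover have "\<forall>x\<in>{1..n}. \<forall>y\<in>{1..n}. \<bar>int (f x) - int (f y)\<bar> \<le> \<bar>int x - int y\<bar>"
      using fO unfolding OCT_def contraction_def by auto
    ultimately have "\<bar>int (f x) - int (f (x+1))\<bar> \<le> \<bar>int x - int (x+1)\<bar>"
      by (meson atLeastAtMost_iff le_add1 le_trans)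
    then show "f (x + 1) \<le> f x + 1" by linarith
  qed
  have gcon: "\<And>x. 1 \<le> x \<Longrightarrow> x + 1 \<le> n \<Longrightarrow> g (x + 1) \<le> g x + 1"
  proof -
    fix x assume "1 \<le> x" "x + 1 \<le> n"
    moreover have "\<forall>x\<in>{1..n}. \<forall>y\<in>{1..n}. \<bar>int (g x) - int (g y)\<bar> \<le> \<bar>int x - int y\<bar>"
      using gO unfolding OCT_def contraction_def by auto
    ultimately have "\<bar>int (g x) - int (g (x+1))\<bar> \<le> \<bar>int x - int (x+1)\<bar>"
      by (meson atLeastAtMost_iff le_add1 le_trans)
    then show "g (x + 1) \<le> g x + 1" by linarith
  qed
  have n1: "1 \<le> n"
  proof (rule ccontr)
    assume "\<not> 1 \<le> n" then have "{1..n} = ({}::nat set)" by auto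
    then show False using cardp p by auto
  qed
  define a where "a = f 1"
  define b where "b = f n"
  have ab: "1 \<le> a" "a \<le> b" "b \<le> n" using fT fmono n1 unfolding a_def b_def by auto
  have ivt: "\<forall>y. a \<le> y \<and> y \<le> f m \<longrightarrow> (\<exists>x\<in>{1..m}. f x = y)" if "1 \<le> m" "m \<le> n" for m
    using that
  proof (induction m rule: nat_induct_at_least)
    case base then show ?case unfolding a_def by auto
  next
    case (Suc m)
    show ?case
    proof (intro allI impI)
      fix y assume y: "a \<le> y \<and> y \<le> f (Suc m)"
      show "\<exists>x\<in>{1..Suc m}. f x = y"
      proof (cases "y \<le> f m")
        case True then show ?thesis using Suc y by force
      next
        case False
        then have "y = f (Suc m)" using fcon[of m] Suc y by auto
        then show ?thesis by force
      qed
    qed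
  qed
  have img: "f ` {1..n} = {a..b}"
  proof
    show "f ` {1..n} \<subseteq> {a..b}" using fmono n1 unfolding a_def b_def by auto
    show "{a..b} \<subseteq> f ` {1..n}"
    proof
      fix y assume "y \<in> {a..b}"
      then obtain x where "x \<in> {1..n}" "f x = y" using ivt[OF n1 order.refl] unfolding b_def by auto
      then show "y \<in> f ` {1..n}" by auto
    qed
  qed
  have pb: "p = b + 1 - a" using cardp img by simp
  define k where "k = g a"
  have key: "a + i \<le> b \<Longrightarrow> g (a + i) = k + i \<and> f (k + i) = a + i" for i
  proof (induction i)
    case 0 then show ?case unfolding k_def a_def using fgf' by simp
  next
    case (Suc i)
    then have IH: "g (a + i) = k + i" "f (k + i) = a + i" by auto
    have "a + Suc i \<in> f ` {1..n}" using img Suc.prems ab by auto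
    then obtain w where w: "f w = a + Suc i" by auto
    have fg: "f (g (a + Suc i)) = a + Suc i" using fgf'[of w] w by simp
    have r1: "a + i \<in> {1..n}" "a + Suc i \<in> {1..n}" using ab Suc.prems by auto
    have "g (a + i) \<le> g (a + Suc i)" using gmono r1 by auto
    moreover have "g (a + Suc i) \<le> g (a + i) + 1" using gcon[of "a + i"] r1 by auto
    moreover have "g (a + Suc i) \<noteq> g (a + i)" using fg IH by auto
    ultimately have "g (a + Suc i) = k + Suc i" using IH by auto
    then show ?case using fg by simp
  qed
  have k1: "1 \<le> k" "k \<le> n" using gT ab unfolding k_def by auto
  have kp: "k + p - 1 \<le> n"
  proof -
    have "g (a + (b - a)) = k + (b - a)" using key[of "b - a"] ab by auto
    moreover have "g (a + (b - a)) \<in> {1..n}" using gT ab by auto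
    ultimately show ?thesis using pb ab by auto
  qed
  have fb: "f (k + (b - a)) = b" using key[of "b - a"] ab by auto
  have "f = F n k a p"
  proof
    fix x
    show "f x = F n k a p x"
    proof (cases "x \<in> {1..n}")
      case False then show ?thesis using fT(2) F_out by auto
    next
      case True
      consider "x \<le> k" | "k \<le> x" "x \<le> k + p - 1" | "k + p - 1 \<le> x" by linarith
      then show ?thesis
      proof cases
        case 1
        have "f x \<le> f k" using fmono True k1 1 by auto
        moreover have "f 1 \<le> f x" using fmono True n1 by auto
        moreover have "f k = a" using key[of 0] ab by simp
        ultimately show ?thesis using F_lo[OF p] True 1 unfolding a_def by fastforce
      next
        case 2
        have "f (k + (x - k)) = a + (x - k)" using key[of "x - k"] 2 pb ab by auto
        then show ?thesis using F_mid True 2 by auto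
      next
        case 3
        have "f (k + (b - a)) \<le> f x" using fmono[of "k + (b - a)" x] True 3 pb ab kp k1 by auto
        moreover have "f x \<le> f n" using fmono True n1 by auto
        ultimately have "f x = b" using fb unfolding b_def by auto
        then show ?thesis using F_hi[OF p] True 3 pb ab by auto
      qed
    qed
  qed
  moreover have "a + p - 1 \<le> n" using ab pb by auto
  ultimately show ?thesis using k1 kp ab by blast
qed

lemma K_sub:
  assumes "n \<ge> 4" "1 \<le> p" "p \<le> n - 2" "f \<in> K n p"
  shows "f \<in> gen (K n (p + 1))"
proof -
  have p2: "p + 2 \<le> n" using assms by auto
  have p1: "1 \<le> p + 1" by simp
  obtain k a where ka: "1 \<le> k" "k + p - 1 \<le> n" "1 \<le> a" "a + p - 1 \<le> n" and f: "f = F n k a p"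
    using char assms by blast
  have opt1: "F n k' a' p \<in> gen (K n (p + 1))"
    if "1 \<le> k'" "k' + p \<le> n" "2 \<le> a'" "a' + p - 1 \<le> n" for k' a'
  proof -
    have "F n k' 2 (p+1) \<in> K n (p+1)" using F_K[OF p1] that p2 by auto
    moreover have "F n 1 (a' - 1) (p+1) \<in> K n (p+1)" using F_K[OF p1] that p2 by auto
    ultimately show ?thesis using F_comp1[OF assms(2) p2 that] gen.intros by metis
  qed
  have opt2: "F n k' a' p \<in> gen (K n (p + 1))"
    if "2 \<le> k'" "k' + p - 1 \<le> n" "1 \<le> a'" "a' + p \<le> n" for k' a'
  proof -
    have "F n (k' - 1) 1 (p+1) \<in> K n (p+1)" using F_K[OF p1] that p2 by auto
    moreover have "F n 2 a' (p+1) \<in> K n (p+1)" using F_K[OF p1] that p2 by auto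
    ultimately show ?thesis using F_comp2[OF assms(2) p2 that] gen.intros by metis
  qed
  consider "k + p \<le> n" "2 \<le> a" | "2 \<le> k" "a + p \<le> n" | "k = 1" "a = 1" | "k = n - p + 1" "a = n - p + 1"
    using ka p2 by linarith
  then show ?thesis
  proof cases
    case 1 then show ?thesis using opt1 ka f by auto
  next
    case 2 then show ?thesis using opt2 ka f by auto
  next
    case 3
    have "F n 1 2 p \<in> gen (K n (p + 1))" using opt1 p2 by auto
    moreover have "F n 2 1 (p+1) \<in> K n (p+1)" using F_K[OF p1] p2 by auto
    ultimately show ?thesis using F_shift1[OF assms(2) p2] f 3 gen.intros by metis
  next
    case 4
    have "F n (n-p+1) (n-p) p \<in> gen (K n (p + 1))" using opt2 p2 by auto
    moreover have "F n (n-p-1) (n-p) (p+1) \<in> K n (p+1)" using F_K[OF p1] p2 by auto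
    ultimately show ?thesis using F_shift2[OF assms(2) p2] f 4 gen.intros by metis
  qed
qed

theorem proposition9:
  fixes n p :: nat
  assumes "n \<ge> 4" and "1 \<le> p" and "p \<le> n - 2"
  shows "gen (K n p) \<subseteq> gen (K n (p + 1))"
proof
  fix f assume "f \<in> gen (K n p)"
  then show "f \<in> gen (K n (p + 1))"
  proof (induction rule: gen.induct)
    case (base a) then show ?case using K_sub assms by blast
  next
    case (comp a b) then show ?case by (blast intro: gen.comp)
  qed
qed

end
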